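(* If a tuple $v\in\mathcal{D}$ is not in the $k$-skyband $\mathcal{S}_k$ of $\mathcal{D}$, then no edge of the $k$-polygon $\mathcal{P}_k$ lies on the line $\overline{v}$; i.e., only tuples of $\mathcal{S}_k$ can form part of the $k$-polygon.
   Context: Let $\mathcal{D}\subset\mathbb{R}^2$ be a finite set of tuples in general position, $k$ a positive integer and $\tau>0$ fixed. The $k$-skyband $\mathcal{S}_k$ is the set of tuples of $\mathcal{D}$ that are not Pareto-dominated by at least $k$ other tuples, where $u$ Pareto-dominates $v$ if $u$ has strictly higher values than $v$ in both coordinates. For a tuple $v$, $\overline{v}=\{x\in\mathbb{R}^2: x\cdot v=\tau\}$; let $\mathcal{L}=\{\overline{v}:v\in\mathcal{D}\}$ and consider their arrangement (vertices = pairwise intersections, edges = segments of lines between consecutive vertices), restricted to the closed positive quadrant. The top-$k$ rank depth of a point $p$ is the number of lines of $\mathcal{L}$ intersecting the closed segment from the origin to $p$; the $k$-polygon $\mathcal{P}_k$ is the set of edges of the arrangement at depth exactly $k$. *)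

theory Defs
  imports "HOL-Analysis.Analysis"
begin

definition dominates :: "real \<times> real \<Rightarrow> real \<times> real \<Rightarrow> bool" where
  "dominates u v \<longleftrightarrow> fst u > fst v \<and> snd u > snd v"

definition skyband :: "(real \<times> real) set \<Rightarrow> nat \<Rightarrow> (real \<times> real) set" where
  "skyband D k = {v \<in> D. card {u \<in> D. dominates u v} < k}"

definition tline :: "real \<Rightarrow> real \<times> real \<Rightarrow> (real \<times> real) set" where
  "tline \<tau> v = {x. x \<bullet> v = \<tau>}"

definition posquad :: "(real \<times> real) set" where
  "posquad = {x. fst x \<ge> 0 \<and> snd x \<ge> 0}"

definition general_position :: "real \<Rightarrow> (real \<times> real) set \<Rightarrow> bool" where
  "general_position \<tau> D \<longleftrightarrow>
     0 \<notin> D \<and>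
     (\<forall>u\<in>D. \<forall>w\<in>D. u \<noteq> w \<longrightarrow> fst u * snd w \<noteq> snd u * fst w) \<and>
     (\<forall>u\<in>D. \<forall>w\<in>D. \<forall>z\<in>D. u \<noteq> w \<and> u \<noteq> z \<and> w \<noteq> z \<longrightarrow>
         tline \<tau> u \<inter> tline \<tau> w \<inter> tline \<tau> z = {})"

definition rank_depth :: "real \<Rightarrow> (real \<times> real) set \<Rightarrow> real \<times> real \<Rightarrow> nat" where
  "rank_depth \<tau> D p = card {tline \<tau> w | w. w \<in> D \<and> closed_segment 0 p \<inter> tline \<tau> w \<noteq> {}}"

text \<open>Edges of the arrangement (restricted to the closed positive quadrant)
  lying on the line of v: closures of the connected components of the part of
  the line of v in the quadrant after removing the vertices (intersections
  with the other lines).  The open component is the relative interior of the edge.\<close>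
definition open_edges_on :: "real \<Rightarrow> (real \<times> real) set \<Rightarrow> real \<times> real \<Rightarrow> (real \<times> real) set set" where
  "open_edges_on \<tau> D v =
     components ((tline \<tau> v \<inter> posquad) - \<Union>{tline \<tau> w | w. w \<in> D \<and> w \<noteq> v})"

definition arr_edges :: "real \<Rightarrow> (real \<times> real) set \<Rightarrow> (real \<times> real) set set" where
  "arr_edges \<tau> D = {closure C | C v. v \<in> D \<and> C \<in> open_edges_on \<tau> D v}"

text \<open>The k-polygon: edges of the arrangement at depth exactly k (the depth
  of an edge being the depth of the points of its relative interior, which is
  constant along the edge).\<close>
definition k_polygon :: "real \<Rightarrow> (real \<times> real) set \<Rightarrow> nat \<Rightarrow> (real \<times> real) set set" where
  "k_polygon \<tau> D k = {closure C | C v. v \<in> D \<and> C \<in> open_edges_on \<tau> D v \<and>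
                                       (\<exists>p\<in>C. rank_depth \<tau> D p = k)}"

end

theory Submission
  imports Defs
begin

lemma inner_pair_expand: "(x::real\<times>real) \<bullet> u = fst x * fst u + snd x * snd u"
  by (cases x; cases u) simp

lemma tline_inj:
  assumes gp: "general_position \<tau> D" and "u \<in> D" "w \<in> D" "u \<noteq> w"
  shows "tline \<tau> u \<noteq> tline \<tau> w"
proof
  assume eq: "tline \<tau> u = tline \<tau> w"
  obtain a b where ab: "u = (a,b)" by (cases u)
  obtain c d where cd: "w = (c,d)" by (cases w)
  have u0: "u \<noteq> 0" using gp assms(2) unfolding general_position_def by auto
  have nz: "a*a + b*b \<noteq> 0" using u0 ab
    by (metis add.commute add_cancel_left_left mult_eq_0_iff not_sum_squares_lt_zero zero_prod_def
        linorder_neqE_linordered_idom mult_nonneg_nonneg zero_le_square add_nonneg_pos)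
  have par: "a * d \<noteq> b * c" using gp assms(2-4) unfolding general_position_def ab cd
    by (metis fst_conv snd_conv)
  define n where "n = a*a + b*b"
  define x0 where "x0 = (\<tau>*a/n, \<tau>*b/n)"
  define x1 where "x1 = (\<tau>*a/n - b, \<tau>*b/n + a)"
  have nn: "n \<noteq> 0" using nz n_def by simp
  have e0: "\<tau>*a/n*a + \<tau>*b/n*b = \<tau>" 
  proof -
    have "\<tau>*a/n*a + \<tau>*b/n*b = \<tau>*n/n" unfolding n_def by (simp add: add_divide_distrib algebra_simps)
    thus ?thesis using nn by simp
  qed
  have "x0 \<in> tline \<tau> u" using e0 unfolding tline_def x0_def ab by simp
  moreover have "x1 \<in> tline \<tau> u" using e0 unfolding tline_def x1_def ab
    by (simp add: algebra_simps)
  ultimately have "x0 \<in> tline \<tau> w" "x1 \<in> tline \<tau> w" using eq by auto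
  hence "x0 \<bullet> w = \<tau>" "x1 \<bullet> w = \<tau>" unfolding tline_def by auto
  hence "x1 \<bullet> w - x0 \<bullet> w = 0" by simp
  moreover have "x1 \<bullet> w - x0 \<bullet> w = a*d - b*c" unfolding x0_def x1_def cd
    by (simp add: algebra_simps)
  ultimately show False using par by simp
qed

theorem lemma4p9:
  fixes D :: "(real \<times> real) set" and k :: nat and \<tau> :: real and v :: "real \<times> real"
  assumes "finite D" and "general_position \<tau> D" and "k > 0" and "\<tau> > 0"
    and "v \<in> D" and "v \<notin> skyband D k"
  shows "\<not> (\<exists>E \<in> k_polygon \<tau> D k. E \<subseteq> tline \<tau> v)"
proof
  assume "\<exists>E \<in> k_polygon \<tau> D k. E \<subseteq> tline \<tau> v"
  then obtain C w p where w: "w \<in> D" and C: "C \<in> open_edges_on \<tau> D w" and p: "p \<in> C"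
    and dep: "rank_depth \<tau> D p = k" and sub: "closure C \<subseteq> tline \<tau> v"
    unfolding k_polygon_def by blast
  have Csub: "C \<subseteq> (tline \<tau> w \<inter> posquad) - \<Union>{tline \<tau> u | u. u \<in> D \<and> u \<noteq> w}"
    using C in_components_subset unfolding open_edges_on_def by blast
  have pv: "p \<in> tline \<tau> v" using sub p closure_subset by blast
  have "w = v"
  proof (rule ccontr)
    assume "w \<noteq> v"
    hence "p \<notin> tline \<tau> v" using Csub p assms(5) by blast
    thus False using pv by simp
  qed
  have pq: "fst p \<ge> 0" "snd p \<ge> 0" using Csub p unfolding posquad_def by auto
  have pvt: "p \<bullet> v = \<tau>" using pv unfolding tline_def by auto
  define Dom where "Dom = {u \<in> D. dominates u v}"
  have cardDom: "card Dom \<ge> k" using assms(5,6) unfolding skyband_def Dom_def by auto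
  have finDom: "finite Dom" using assms(1) unfolding Dom_def by auto
  have vDom: "v \<notin> Dom" unfolding Dom_def dominates_def by auto
  define S where "S = {tline \<tau> u | u. u \<in> D \<and> closed_segment 0 p \<inter> tline \<tau> u \<noteq> {}}"
  have "S \<subseteq> tline \<tau> ` D" unfolding S_def by blast
  hence finS: "finite S" using assms(1) finite_subset by blast
  have inS: "tline \<tau> ` insert v Dom \<subseteq> S"
  proof
    fix L assume "L \<in> tline \<tau> ` insert v Dom"
    then obtain u where u: "u \<in> insert v Dom" and L: "L = tline \<tau> u" by blast
    show "L \<in> S"
    proof (cases "u = v")
      case True
      thus ?thesis unfolding S_def L using assms(5) pv by blast
    next
      case False
      hence uD: "u \<in> D" and dm: "fst u > fst v" "snd u > snd v"
        using u unfolding Dom_def dominates_def by auto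
      have "p \<bullet> u - p \<bullet> v = fst p * (fst u - fst v) + snd p * (snd u - snd v)"
        by (simp add: inner_pair_expand algebra_simps)
      moreover have "fst p > 0 \<or> snd p > 0"
      proof (rule ccontr)
        assume "\<not> (fst p > 0 \<or> snd p > 0)"
        hence "fst p = 0" "snd p = 0" using pq by auto
        hence "p \<bullet> v = 0" by (simp add: inner_pair_expand)
        thus False using pvt assms(4) by simp
      qed
      ultimately have "p \<bullet> u - p \<bullet> v > 0" using pq dm
        by (smt (verit) mult_nonneg_nonneg mult_pos_pos)
      hence gt: "p \<bullet> u > \<tau>" using pvt by simp
      define t where "t = \<tau> / (p \<bullet> u)"
      have t01: "0 \<le> t" "t \<le> 1" using gt assms(4) unfolding t_def by auto
      have "t *\<^sub>R p \<in> closed_segment 0 p" unfolding closed_segment_def using t01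
        by (auto intro!: exI[of _ t])
      moreover have "t *\<^sub>R p \<in> tline \<tau> u" unfolding tline_def t_def using gt assms(4) by simp
      ultimately show ?thesis unfolding S_def L using uD by blast
    qed
  qed
  have inj: "inj_on (tline \<tau>) (insert v Dom)"
    unfolding inj_on_def using tline_inj[OF assms(2)] assms(5) unfolding Dom_def by blast
  have "card (tline \<tau> ` insert v Dom) = card Dom + 1"
    using card_image[OF inj] finDom vDom by simp
  hence "card S \<ge> k + 1" using card_mono[OF finS inS] cardDom by simp
  moreover have "card S = k" using dep unfolding rank_depth_def S_def .
  ultimately show False by simp
qed

end
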